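(* Let $n\ge3$, $d=\phi(n)/2$, $G=\mathrm{Gal}(\mathbf Q(\mu_n)|\mathbf Q)$, $c\in G$ complex conjugation, and let $\Phi=\{\Phi_1,\dots,\Phi_d\}\subseteq G$ be a C.M. type (so $G=\Phi\sqcup c\Phi$). Let $f:G\to\mathbf C$ be odd, i.e. $f(c\circ x)=-f(x)$ for all $x$, and let $M_f$ be the $d\times d$ matrix $[f(\Phi_k^{-1}\circ\Phi_l)]_{l,k}$. If $\langle\chi,f\rangle\neq0$ for all odd characters $\chi$ of $G$, then $M_f$ is invertible and the solution of $M_f\vec X=\vec Y$, $\vec X=(X_1,\dots,X_d)$, $\vec Y=(Y_1,\dots,Y_d)$, is $$X_j=\sum_{\chi\ \mathrm{odd}}\frac{\chi(\Phi_j)\sum_l\overline\chi(\Phi_l)Y_l}{d^2\langle f,\chi\rangle}.$$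
   Context: $\langle a,b\rangle=\frac1{\#G}\sum_{g\in G}a(g)\overline{b(g)}$. A character $\chi$ of $G$ is odd if $\chi(c)=-1$. *)

theory Defs
  imports "HOL-Number_Theory.Number_Theory" "Jordan_Normal_Form.Matrix"
begin

text \<open>G = Gal(Q(mu_n)|Q), identified with (Z/nZ)^* via sigma_a(zeta) = zeta^a.
  Elements are residues a in {0..<n} coprime to n; composition is multiplication mod n.\<close>

definition galG :: "nat \<Rightarrow> nat set" where
  "galG n = {a. a < n \<and> coprime a n}"

definition gmul :: "nat \<Rightarrow> nat \<Rightarrow> nat \<Rightarrow> nat" where
  "gmul n a b = (a * b) mod n"

definition ginv :: "nat \<Rightarrow> nat \<Rightarrow> nat" where
  "ginv n a = (THE b. b \<in> galG n \<and> gmul n a b = 1)"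

text \<open>complex conjugation corresponds to the residue -1 = n - 1\<close>
definition cconj :: "nat \<Rightarrow> nat" where
  "cconj n = n - 1"

text \<open>Characters of G (homomorphisms G -> C^*), normalised to be 0 off G so that
  the set of characters is a set of functions with finitely many members.\<close>
definition is_char :: "nat \<Rightarrow> (nat \<Rightarrow> complex) \<Rightarrow> bool" where
  "is_char n \<chi> \<longleftrightarrow> \<chi> 1 = 1 \<and>
     (\<forall>a\<in>galG n. \<forall>b\<in>galG n. \<chi> (gmul n a b) = \<chi> a * \<chi> b) \<and>
     (\<forall>a. a \<notin> galG n \<longrightarrow> \<chi> a = 0)"

definition odd_chars :: "nat \<Rightarrow> (nat \<Rightarrow> complex) set" where
  "odd_chars n = {\<chi>. is_char n \<chi> \<and> \<chi> (cconj n) = -1}"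

definition ginner :: "nat \<Rightarrow> (nat \<Rightarrow> complex) \<Rightarrow> (nat \<Rightarrow> complex) \<Rightarrow> complex" where
  "ginner n a b = (1 / of_nat (card (galG n))) * (\<Sum>g\<in>galG n. a g * cnj (b g))"

text \<open>A C.M. type, given as an enumeration Phi 0, ..., Phi (d-1) (= Phi_1..Phi_d):
  G is the disjoint union of Phi and c Phi.\<close>
definition cm_type :: "nat \<Rightarrow> nat \<Rightarrow> (nat \<Rightarrow> nat) \<Rightarrow> bool" where
  "cm_type n d Phi \<longleftrightarrow> inj_on Phi {..<d} \<and> Phi ` {..<d} \<subseteq> galG n \<and>
     galG n = Phi ` {..<d} \<union> gmul n (cconj n) ` Phi ` {..<d} \<and>
     Phi ` {..<d} \<inter> gmul n (cconj n) ` Phi ` {..<d} = {}"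

definition odd_fun :: "nat \<Rightarrow> (nat \<Rightarrow> complex) \<Rightarrow> bool" where
  "odd_fun n f \<longleftrightarrow> (\<forall>x\<in>galG n. f (gmul n (cconj n) x) = - f x)"

definition Mf :: "nat \<Rightarrow> nat \<Rightarrow> (nat \<Rightarrow> nat) \<Rightarrow> (nat \<Rightarrow> complex) \<Rightarrow> complex mat" where
  "Mf n d Phi f = mat d d (\<lambda>(l, k). f (gmul n (ginv n (Phi k)) (Phi l)))"

end

theory Submission
  imports Defs "HOL-Algebra.Multiplicative_Group" "Jordan_Normal_Form.Determinant"
begin

definition isch :: "('a,'b) monoid_scheme \<Rightarrow> ('a \<Rightarrow> complex) \<Rightarrow> bool" where
 "isch G \<chi> \<longleftrightarrow> \<chi> (one G) = 1 \<and> (\<forall>a\<in>carrier G. \<forall>b\<in>carrier G. \<chi> (mult G a b) = \<chi> a * \<chi> b)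
    \<and> (\<forall>a. a \<notin> carrier G \<longrightarrow> \<chi> a = 0)"

lemma half_lemma: "2 * (s::complex) = n * x \<Longrightarrow> s = n / 2 * x"
  by (simp add: field_simps)

lemma half_lemma2: "(N::complex) \<noteq> 0 \<Longrightarrow> 1 / N * a * (N / 2 * X) = 1 / 2 * a * X"
  by (simp add: field_simps)

lemma complex_root_ex: "0 < (m::nat) \<Longrightarrow> \<exists>z::complex. z ^ m = w"
proof (cases "w = 0")
  case True
  assume "0 < m" then show ?thesis using True by (intro exI[of _ 0]) simp
next
  case False
  assume m: "0 < m"
  from bij_betw_nth_root_unity[OF False m] have e: "(\<lambda>z. (root m (norm w) * cis (Arg w / m)) * z) ` {z. z ^ m = 1} = {z. z ^ m = w}"
    unfolding bij_betw_def by auto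
  have "(root m (norm w) * cis (Arg w / m)) * 1 \<in> (\<lambda>z. (root m (norm w) * cis (Arg w / m)) * z) ` {z. z ^ m = 1}"
    by (rule imageI) simp
  then have "(root m (norm w) * cis (Arg w / m)) * 1 \<in> {z. z ^ m = w}" using e by simp
  then show ?thesis by blast
qed

locale fcg = comm_group G for G (structure) + assumes fin: "finite (carrier G)"
begin

definition closedS :: "'a set \<Rightarrow> bool" where
  "closedS H \<longleftrightarrow> H \<subseteq> carrier G \<and> \<one> \<in> H \<and> (\<forall>a\<in>H. \<forall>b\<in>H. a \<otimes> b \<in> H)"
definition homS :: "'a set \<Rightarrow> ('a \<Rightarrow> complex) \<Rightarrow> bool" where
  "homS H \<chi> \<longleftrightarrow> \<chi> \<one> = 1 \<and> (\<forall>a\<in>H. \<forall>b\<in>H. \<chi> (a \<otimes> b) = \<chi> a * \<chi> b)"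

lemma closed_pow: "closedS H \<Longrightarrow> a \<in> H \<Longrightarrow> a [^] (k::nat) \<in> H"
proof (induction k)
  case 0 then show ?case by (simp add: closedS_def)
next
  case (Suc k)
  have "a \<in> carrier G" using Suc.prems by (auto simp: closedS_def)
  then have "a [^] Suc k = a [^] k \<otimes> a" by (simp add: nat_pow_Suc)
  then show ?case using Suc by (auto simp: closedS_def)
qed

lemma order_pos: "0 < Coset.order G"
  using fin by (simp add: order_gt_0_iff_finite)

lemma closed_inv: assumes H: "closedS H" and a: "a \<in> H" shows "inv a \<in> H"
proof -
  have ac: "a \<in> carrier G" using H a by (auto simp: closedS_def)
  have "a [^] (Coset.order G - 1) \<otimes> a = a [^] Coset.order G"
    using order_pos ac by (metis Suc_diff_1 nat_pow_Suc)
  also have "\<dots> = \<one>" using pow_order_eq_1[OF ac] .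
  finally have "inv a = a [^] (Coset.order G - 1)"
    using ac by (intro inv_equality) auto
  then show ?thesis using closed_pow[OF H a] by simp
qed

lemma hom_pow: "homS H \<chi> \<Longrightarrow> closedS H \<Longrightarrow> a \<in> H \<Longrightarrow> \<chi> (a [^] (k::nat)) = \<chi> a ^ k"
proof (induction k)
  case 0 then show ?case by (simp add: homS_def)
next
  case (Suc k)
  have "a \<in> carrier G" using Suc.prems by (auto simp: closedS_def)
  then have "a [^] Suc k = a [^] k \<otimes> a" by (simp add: nat_pow_Suc)
  then show ?case using Suc closed_pow[OF Suc.prems(2,3), of k] by (auto simp: homS_def)
qed

lemma ext_step:
  assumes H: "closedS H" and hom: "homS H \<chi>" and x: "x \<in> carrier G"
    and mdef: "(m::nat) = (LEAST m::nat. 0 < m \<and> x [^] m \<in> H)" and z: "\<zeta> ^ m = \<chi> (x [^] m)"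
  shows "\<exists>\<chi>'. homS {h \<otimes> x [^] (i::nat) | h i. h \<in> H} \<chi>' \<and> (\<forall>a\<in>H. \<chi>' a = \<chi> a) \<and> \<chi>' x = \<zeta>"
proof -
  have HG: "H \<subseteq> carrier G" using H by (simp add: closedS_def)
  have ex: "\<exists>m::nat. 0 < m \<and> x [^] m \<in> H"
    using order_pos pow_order_eq_1[OF x] H by (intro exI[of _ "Coset.order G"]) (auto simp: closedS_def)
  have m: "0 < m" "x [^] m \<in> H" using LeastI_ex[OF ex] mdef by auto
  have mmin: "x [^] r \<notin> H" if "0 < r" "r < m" for r :: nat
    using not_less_Least[of r "\<lambda>m::nat. 0 < m \<and> x [^] m \<in> H"] that mdef by auto
  have key: "\<chi> (x [^] k) = \<zeta> ^ k" if k: "x [^] (k::nat) \<in> H" for k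
  proof -
    define q r where "q = k div m" and "r = k mod m"
    have kqr: "k = m * q + r" by (simp add: q_def r_def)
    have rm: "r < m" using m by (simp add: r_def)
    have e1: "x [^] k = (x [^] m) [^] q \<otimes> x [^] r"
      using x by (simp add: kqr nat_pow_mult nat_pow_pow)
    have xm: "(x [^] m) [^] q \<in> H" using closed_pow[OF H m(2)] .
    have "x [^] r = inv ((x [^] m) [^] q) \<otimes> x [^] k"
      using e1 x by (simp add: m_assoc[symmetric])
    also have "\<dots> \<in> H" using closed_inv[OF H xm] k H by (auto simp: closedS_def)
    finally have "r = 0" using mmin rm by blast
    then have "x [^] k = (x [^] m) [^] q" using e1 x by simp
    then have "\<chi> (x [^] k) = \<chi> (x [^] m) ^ q" using hom_pow[OF hom H m(2)] by simp
    also have "\<dots> = \<zeta> ^ k" using z \<open>r = 0\<close> by (simp add: kqr power_mult)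
    finally show ?thesis .
  qed
  have wd0: "\<chi> h * \<zeta> ^ i = \<chi> h' * \<zeta> ^ j"
    if hh: "h \<in> H" "h' \<in> H" and eq: "h \<otimes> x [^] i = h' \<otimes> x [^] j" and ji: "j \<le> (i::nat)" for h h' i j
  proof -
    define k where "k = i - j"
    have ik: "i = k + j" using ji by (simp add: k_def)
    have hc: "h \<in> carrier G" "h' \<in> carrier G" using hh HG by auto
    have "h \<otimes> x [^] k \<otimes> x [^] j = h' \<otimes> x [^] j"
      using eq x hc by (simp add: ik nat_pow_mult m_assoc)
    then have e2: "h \<otimes> x [^] k = h'" using x hc by (metis right_cancel nat_pow_closed m_closed)
    then have "x [^] k = inv h \<otimes> h'" using x hc by (metis inv_solve_left nat_pow_closed)
    also have "\<dots> \<in> H" using closed_inv[OF H hh(1)] hh H by (auto simp: closedS_def)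
    finally have xk: "x [^] k \<in> H" .
    have "\<chi> h' = \<chi> h * \<zeta> ^ k" using hom hh xk key[OF xk] e2 by (auto simp: homS_def)
    then show ?thesis by (simp add: ik power_add)
  qed
  have wd: "\<chi> h * \<zeta> ^ i = \<chi> h' * \<zeta> ^ j"
    if "h \<in> H" "h' \<in> H" "h \<otimes> x [^] i = h' \<otimes> x [^] j" for h h' i j
    using wd0[of h h' i j] wd0[of h' h j i] that by (cases "j \<le> i") auto
  define \<chi>' where "\<chi>' y = (let p = (SOME p. fst p \<in> H \<and> y = fst p \<otimes> x [^] (snd p::nat)) in \<chi> (fst p) * \<zeta> ^ snd p)" for y
  have rep: "\<chi>' (h \<otimes> x [^] i) = \<chi> h * \<zeta> ^ i" if "h \<in> H" for h i
  proof -
    let ?P = "\<lambda>p. fst p \<in> H \<and> h \<otimes> x [^] i = fst p \<otimes> x [^] (snd p::nat)"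
    have "?P (h, i)" using that by simp
    then have P: "?P (SOME p. ?P p)" by (rule someI)
    define p where "p = (SOME p. ?P p)"
    have P': "fst p \<in> H" "h \<otimes> x [^] i = fst p \<otimes> x [^] (snd p)" using P unfolding p_def by auto
    have "\<chi>' (h \<otimes> x [^] i) = \<chi> (fst p) * \<zeta> ^ snd p" unfolding \<chi>'_def p_def Let_def by simp
    also have "\<dots> = \<chi> h * \<zeta> ^ i" using wd[OF that P'(1) P'(2)] by simp
    finally show ?thesis .
  qed
  let ?K = "{h \<otimes> x [^] (i::nat) | h i. h \<in> H}"
  have one: "\<chi>' \<one> = 1"
    using rep[of \<one> 0] H hom by (simp add: closedS_def homS_def)
  have mult: "\<chi>' (a \<otimes> b) = \<chi>' a * \<chi>' b" if ab: "a \<in> ?K" "b \<in> ?K" for a b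
  proof -
    obtain h i h' j where a: "a = h \<otimes> x [^] (i::nat)" "h \<in> H" and b: "b = h' \<otimes> x [^] (j::nat)" "h' \<in> H"
      using ab by blast
    have hc: "h \<in> carrier G" "h' \<in> carrier G" using a b HG by auto
    have "a \<otimes> b = (h \<otimes> h') \<otimes> x [^] (i + j)"
      using a b hc x by (simp add: nat_pow_mult m_ac)
    moreover have "h \<otimes> h' \<in> H" using a b H by (auto simp: closedS_def)
    ultimately have "\<chi>' (a \<otimes> b) = \<chi> (h \<otimes> h') * \<zeta> ^ (i + j)" using rep by simp
    also have "\<dots> = (\<chi> h * \<zeta> ^ i) * (\<chi> h' * \<zeta> ^ j)"
      using hom a b by (simp add: homS_def power_add)
    finally show ?thesis using rep a b by simp
  qed
  have agree: "\<chi>' a = \<chi> a" if "a \<in> H" for a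
    using rep[OF that, of 0] that HG by auto
  have "\<chi>' x = \<zeta>"
    using rep[of \<one> 1] H hom x by (simp add: closedS_def homS_def)
  then show ?thesis using one mult agree unfolding homS_def by blast
qed

lemma ext_all:
  "closedS H \<Longrightarrow> homS H \<chi> \<Longrightarrow> \<exists>\<chi>'. homS (carrier G) \<chi>' \<and> (\<forall>a\<in>H. \<chi>' a = \<chi> a)"
proof (induction "card (carrier G - H)" arbitrary: H \<chi> rule: less_induct)
  case less
  show ?case
  proof (cases "H = carrier G")
    case True then show ?thesis using less.prems by (intro exI[of _ \<chi>]) simp
  next
    case False
    then obtain x where x: "x \<in> carrier G" "x \<notin> H" using less.prems by (auto simp: closedS_def)
    define m where "m = (LEAST m::nat. 0 < m \<and> x [^] m \<in> H)"
    have ex: "\<exists>m::nat. 0 < m \<and> x [^] m \<in> H"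
      using order_pos pow_order_eq_1[OF x(1)] less.prems by (intro exI[of _ "Coset.order G"]) (auto simp: closedS_def)
    have "0 < m" using LeastI_ex[OF ex] m_def by auto
    then obtain \<zeta> where z: "\<zeta> ^ m = \<chi> (x [^] m)" using complex_root_ex by blast
    let ?K = "{h \<otimes> x [^] (i::nat) | h i. h \<in> H}"
    obtain \<chi>1 where c1: "homS ?K \<chi>1" "\<forall>a\<in>H. \<chi>1 a = \<chi> a"
      using ext_step[OF less.prems x(1) m_def z] by blast
    have HG: "H \<subseteq> carrier G" using less.prems by (simp add: closedS_def)
    have KG: "?K \<subseteq> carrier G" using HG x by auto
    have HK: "H \<subseteq> ?K"
    proof
      fix a assume "a \<in> H" then show "a \<in> ?K" using HG by (intro CollectI exI[of _ a] exI[of _ "0::nat"]) auto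
    qed
    have xK: "x \<in> ?K" using less.prems by (intro CollectI exI[of _ \<one>] exI[of _ "1::nat"]) (auto simp: closedS_def x)
    have clK: "closedS ?K"
      unfolding closedS_def
    proof (intro conjI ballI KG)
      show "\<one> \<in> ?K" using HK less.prems by (auto simp: closedS_def)
    next
      fix a b assume "a \<in> ?K" "b \<in> ?K"
      then obtain h i h' j where a: "a = h \<otimes> x [^] (i::nat)" "h \<in> H" and b: "b = h' \<otimes> x [^] (j::nat)" "h' \<in> H"
        by blast
      have hc: "h \<in> carrier G" "h' \<in> carrier G" using a b HG by auto
      have "a \<otimes> b = (h \<otimes> h') \<otimes> x [^] (i + j)"
        using a b hc x by (simp add: nat_pow_mult m_ac)
      moreover have "h \<otimes> h' \<in> H" using a b less.prems by (auto simp: closedS_def)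
      ultimately show "a \<otimes> b \<in> ?K" by blast
    qed
    have "card (carrier G - ?K) < card (carrier G - H)"
      using fin HK xK x by (intro psubset_card_mono) auto
    from less.hyps[OF this clK c1(1)] obtain \<chi>2 where
      c2: "homS (carrier G) \<chi>2" "\<forall>a\<in>?K. \<chi>2 a = \<chi>1 a" by blast
    have "\<chi>2 a = \<chi> a" if a: "a \<in> H" for a
    proof -
      have "a \<in> ?K" using HK a by (rule subsetD)
      then have "\<chi>2 a = \<chi>1 a" using c2(2) by blast
      then show ?thesis using c1(2) a by simp
    qed
    then show ?thesis using c2(1) by blast
  qed
qed

lemma separation:
  assumes g: "g \<in> carrier G" "g \<noteq> \<one>"
  shows "\<exists>\<chi>. isch G \<chi> \<and> \<chi> g \<noteq> 1"
proof -
  let ?H = "{\<one>}"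
  have clH: "closedS ?H" by (simp add: closedS_def)
  have hH: "homS ?H (\<lambda>_. 1)" by (simp add: homS_def)
  define m where "m = (LEAST m::nat. 0 < m \<and> g [^] m \<in> ?H)"
  have ex: "\<exists>m::nat. 0 < m \<and> g [^] m \<in> ?H"
    using order_pos pow_order_eq_1[OF g(1)] by (intro exI[of _ "Coset.order G"]) auto
  have m: "0 < m" "g [^] m = \<one>" using LeastI_ex[OF ex] m_def by auto
  have "m \<noteq> 1" using m g by auto
  with m have m2: "1 < m" by simp
  define \<zeta> where "\<zeta> = cis (2 * pi * real 1 / real m)"
  have "\<zeta> \<noteq> cis (2 * pi * real 0 / real m)"
  proof
    assume "\<zeta> = cis (2 * pi * real 0 / real m)"
    then have "(1::nat) = 0"
      using inj_onD[OF conjunct1[OF bij_betw_roots_unity[OF m(1), unfolded bij_betw_def]], of 1 0] m2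
      unfolding \<zeta>_def by simp
    then show False by simp
  qed
  then have z1: "\<zeta> \<noteq> 1" by simp
  have "\<zeta> ^ m = 1"
    using m(1) by (simp add: \<zeta>_def DeMoivre)
  then have z: "\<zeta> ^ m = (\<lambda>_. 1) (g [^] m)" by simp
  let ?K = "{h \<otimes> g [^] (i::nat) | h i. h \<in> ?H}"
  obtain \<chi>1 where c1: "homS ?K \<chi>1" "\<chi>1 g = \<zeta>"
    using ext_step[OF clH hH g(1) m_def z] by blast
  have clK: "closedS ?K"
    unfolding closedS_def
  proof (intro conjI ballI)
    show "?K \<subseteq> carrier G" using g by auto
    show "\<one> \<in> ?K" by (intro CollectI exI[of _ \<one>] exI[of _ "0::nat"]) auto
  next
    fix a b assume "a \<in> ?K" "b \<in> ?K"
    then obtain i j where "a = g [^] (i::nat)" "b = g [^] (j::nat)" using g by auto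
    then have "a \<otimes> b = \<one> \<otimes> g [^] (i + j)" using g by (simp add: nat_pow_mult)
    then show "a \<otimes> b \<in> ?K" by blast
  qed
  obtain \<chi>2 where c2: "homS (carrier G) \<chi>2" "\<forall>a\<in>?K. \<chi>2 a = \<chi>1 a"
    using ext_all[OF clK c1(1)] by blast
  have gK: "g \<in> ?K" using g by (intro CollectI exI[of _ \<one>] exI[of _ "1::nat"]) auto
  define \<chi> where "\<chi> y = (if y \<in> carrier G then \<chi>2 y else 0)" for y
  have "isch G \<chi>" using c2(1) unfolding isch_def homS_def \<chi>_def by auto
  moreover have "\<chi> g \<noteq> 1" using c2(2) gK c1(2) z1 g unfolding \<chi>_def by auto
  ultimately show ?thesis by blast
qed

lemma ch_one: "isch G \<chi> \<Longrightarrow> \<chi> \<one> = 1" by (simp add: isch_def)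
lemma ch_mult: "isch G \<chi> \<Longrightarrow> a \<in> carrier G \<Longrightarrow> b \<in> carrier G \<Longrightarrow> \<chi> (a \<otimes> b) = \<chi> a * \<chi> b"
  by (simp add: isch_def)
lemma ch_out: "isch G \<chi> \<Longrightarrow> a \<notin> carrier G \<Longrightarrow> \<chi> a = 0" by (simp add: isch_def)

lemma ch_pow: "isch G \<chi> \<Longrightarrow> a \<in> carrier G \<Longrightarrow> \<chi> (a [^] (k::nat)) = \<chi> a ^ k"
proof (induction k)
  case 0 then show ?case using ch_one by simp
next
  case (Suc k)
  have "\<chi> (a [^] Suc k) = \<chi> (a [^] k) * \<chi> a"
    using ch_mult[OF Suc.prems(1) nat_pow_closed[OF Suc.prems(2)] Suc.prems(2)] by simp
  then show ?case using Suc by simp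
qed

lemma ch_root: "isch G \<chi> \<Longrightarrow> a \<in> carrier G \<Longrightarrow> \<chi> a ^ Coset.order G = 1"
  by (metis ch_pow ch_one pow_order_eq_1)

lemma ch_norm: assumes "isch G \<chi>" "a \<in> carrier G" shows "norm (\<chi> a) = 1"
proof -
  have "norm (\<chi> a) ^ Coset.order G = 1" using ch_root[OF assms] by (metis norm_one norm_power)
  then have "norm (\<chi> a) ^ Coset.order G = 1 ^ Coset.order G" by simp
  then show ?thesis using order_pos power_eq_imp_eq_base[of "norm (\<chi> a)" "Coset.order G" 1] by simp
qed

lemma ch_nz: "isch G \<chi> \<Longrightarrow> a \<in> carrier G \<Longrightarrow> \<chi> a \<noteq> 0"
  using ch_norm by force

lemma cnj_mult_self: "norm (z::complex) = 1 \<Longrightarrow> cnj z * z = 1"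
  by (metis complex_norm_square mult.commute of_real_1 one_power2)

lemma ch_inv: assumes "isch G \<chi>" "a \<in> carrier G" shows "\<chi> (inv a) = cnj (\<chi> a)"
proof -
  have "\<chi> (inv a) * \<chi> a = 1" using assms by (metis ch_mult ch_one inv_closed l_inv)
  moreover have "cnj (\<chi> a) * \<chi> a = 1" using cnj_mult_self ch_norm[OF assms] .
  ultimately show ?thesis using ch_nz[OF assms] by (metis mult_right_cancel)
qed

lemma ch_prod: "isch G \<chi> \<Longrightarrow> isch G \<psi> \<Longrightarrow> isch G (\<lambda>x. \<chi> x * \<psi> x)"
  by (simp add: isch_def)
lemma ch_cnj: "isch G \<chi> \<Longrightarrow> isch G (\<lambda>x. cnj (\<chi> x))"
  by (simp add: isch_def)
lemma ch_triv: "isch G (\<lambda>x. if x \<in> carrier G then 1 else 0)"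
  by (simp add: isch_def)

lemma ch_finite: "finite {\<chi>. isch G \<chi>}"
proof -
  let ?R = "{z::complex. z ^ Coset.order G = 1}"
  have fR: "finite ?R" using order_pos by (intro finite_roots_unity) auto
  have inj: "inj_on (\<lambda>\<chi>. restrict \<chi> (carrier G)) {\<chi>. isch G \<chi>}"
  proof (rule inj_onI)
    fix \<chi> \<psi> assume a: "\<chi> \<in> {\<chi>. isch G \<chi>}" "\<psi> \<in> {\<chi>. isch G \<chi>}"
      "restrict \<chi> (carrier G) = restrict \<psi> (carrier G)"
    show "\<chi> = \<psi>"
    proof
      fix x show "\<chi> x = \<psi> x"
        using a ch_out[of \<chi> x] ch_out[of \<psi> x] by (cases "x \<in> carrier G") (auto dest: fun_cong[of _ _ x])
    qed
  qed
  have "(\<lambda>\<chi>. restrict \<chi> (carrier G)) ` {\<chi>. isch G \<chi>} \<subseteq> PiE (carrier G) (\<lambda>_. ?R)"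
    using ch_root by auto
  then have "finite ((\<lambda>\<chi>. restrict \<chi> (carrier G)) ` {\<chi>. isch G \<chi>})"
    using finite_PiE[OF fin, of "\<lambda>_. ?R"] fR finite_subset by blast
  then show ?thesis using finite_imageD[OF _ inj] by blast
qed

lemma sum_ch: assumes "isch G \<chi>"
  shows "(\<Sum>a\<in>carrier G. \<chi> a) = (if \<forall>a\<in>carrier G. \<chi> a = 1 then of_nat (Coset.order G) else 0)"
proof (cases "\<forall>a\<in>carrier G. \<chi> a = 1")
  case True then show ?thesis by (simp add: Coset.order_def)
next
  case False
  then obtain b where b: "b \<in> carrier G" "\<chi> b \<noteq> 1" by blast
  have "(\<Sum>a\<in>carrier G. \<chi> a) = (\<Sum>a\<in>(\<lambda>x. b \<otimes> x) ` carrier G. \<chi> a)"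
    using surj_const_mult[OF b(1)] by simp
  also have "\<dots> = (\<Sum>a\<in>carrier G. \<chi> (b \<otimes> a))"
    using inj_on_cmult[OF b(1)] by (simp add: sum.reindex)
  also have "\<dots> = \<chi> b * (\<Sum>a\<in>carrier G. \<chi> a)"
    using assms b by (simp add: ch_mult sum_distrib_left)
  finally have "(1 - \<chi> b) * (\<Sum>a\<in>carrier G. \<chi> a) = 0" by (simp add: algebra_simps)
  then have "(\<Sum>a\<in>carrier G. \<chi> a) = 0" using b(2) by simp
  then show ?thesis using False by presburger
qed

lemma orth: assumes "isch G \<chi>" "isch G \<psi>"
  shows "(\<Sum>a\<in>carrier G. \<chi> a * cnj (\<psi> a)) = (if \<chi> = \<psi> then of_nat (Coset.order G) else 0)"
proof -
  have i: "isch G (\<lambda>x. \<chi> x * cnj (\<psi> x))" using ch_prod[OF assms(1) ch_cnj[OF assms(2)]] .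
  have "(\<forall>a\<in>carrier G. \<chi> a * cnj (\<psi> a) = 1) \<longleftrightarrow> \<chi> = \<psi>"
  proof
    assume h: "\<forall>a\<in>carrier G. \<chi> a * cnj (\<psi> a) = 1"
    show "\<chi> = \<psi>"
    proof
      fix x show "\<chi> x = \<psi> x"
      proof (cases "x \<in> carrier G")
        case True
        have "\<chi> x * (cnj (\<psi> x) * \<psi> x) = \<psi> x" using h True by (metis mult.assoc mult_1_left)
        then show ?thesis using cnj_mult_self[OF ch_norm[OF assms(2) True]] by simp
      qed (use ch_out[OF assms(1)] ch_out[OF assms(2)] in auto)
    qed
  next
    assume "\<chi> = \<psi>" then show "\<forall>a\<in>carrier G. \<chi> a * cnj (\<psi> a) = 1"
      using cnj_mult_self[OF ch_norm[OF assms(2)]] by (simp add: mult.commute)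
  qed
  then show ?thesis using sum_ch[OF i] by (simp only:)
qed

lemma col: assumes a: "a \<in> carrier G"
  shows "(\<Sum>\<chi>\<in>{\<chi>. isch G \<chi>}. \<chi> a) = (if a = \<one> then of_nat (card {\<chi>. isch G \<chi>}) else 0)"
proof (cases "a = \<one>")
  case True then show ?thesis by (simp add: ch_one)
next
  case False
  obtain \<psi> where psi: "isch G \<psi>" "\<psi> a \<noteq> 1" using separation[OF a False] by blast
  let ?Ch = "{\<chi>. isch G \<chi>}"
  let ?T = "\<lambda>\<chi>. (\<lambda>x. \<psi> x * \<chi> x)"
  let ?U = "\<lambda>\<chi>. (\<lambda>x. cnj (\<psi> x) * \<chi> x)"
  have bij: "bij_betw ?T ?Ch ?Ch"
  proof (rule bij_betw_byWitness[where f' = ?U])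
    show "\<forall>\<chi>\<in>?Ch. ?U (?T \<chi>) = \<chi>"
    proof (intro ballI ext)
      fix \<chi> x assume "\<chi> \<in> ?Ch"
      then show "?U (?T \<chi>) x = \<chi> x"
        using cnj_mult_self[OF ch_norm[OF psi(1)], of x] ch_out[OF psi(1), of x]
        by (cases "x \<in> carrier G") (auto simp: mult.assoc[symmetric] ch_out)
    qed
    show "\<forall>\<chi>\<in>?Ch. ?T (?U \<chi>) = \<chi>"
    proof (intro ballI ext)
      fix \<chi> x assume "\<chi> \<in> ?Ch"
      then show "?T (?U \<chi>) x = \<chi> x"
        using cnj_mult_self[OF ch_norm[OF psi(1)], of x] ch_out[OF psi(1), of x]
        by (cases "x \<in> carrier G") (auto simp: mult.assoc[symmetric] mult.commute[of "\<psi> x"] ch_out)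
    qed
    show "?T ` ?Ch \<subseteq> ?Ch" using ch_prod[OF psi(1)] by auto
    show "?U ` ?Ch \<subseteq> ?Ch" using ch_prod[OF ch_cnj[OF psi(1)]] by auto
  qed
  have "(\<Sum>\<chi>\<in>?Ch. \<chi> a) = (\<Sum>\<chi>\<in>?Ch. ?T \<chi> a)"
    using sum.reindex_bij_betw[OF bij, of "\<lambda>\<chi>. \<chi> a"] by simp
  also have "\<dots> = \<psi> a * (\<Sum>\<chi>\<in>?Ch. \<chi> a)" by (simp add: sum_distrib_left)
  finally have "(1 - \<psi> a) * (\<Sum>\<chi>\<in>?Ch. \<chi> a) = 0" by (simp add: algebra_simps)
  then have "(\<Sum>\<chi>\<in>?Ch. \<chi> a) = 0" using psi(2) by simp
  then show ?thesis using False by simp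
qed

lemma card_ch: "card {\<chi>. isch G \<chi>} = Coset.order G"
proof -
  let ?Ch = "{\<chi>. isch G \<chi>}"
  let ?t = "\<lambda>x. if x \<in> carrier G then (1::complex) else 0"
  have "(\<Sum>a\<in>carrier G. \<Sum>\<chi>\<in>?Ch. \<chi> a) = (\<Sum>a\<in>carrier G. if a = \<one> then of_nat (card ?Ch) else 0)"
    using col by simp
  also have "\<dots> = of_nat (card ?Ch)" using fin by (simp add: sum.delta)
  finally have 1: "(\<Sum>a\<in>carrier G. \<Sum>\<chi>\<in>?Ch. \<chi> a) = of_nat (card ?Ch)" .
  have "(\<Sum>a\<in>carrier G. \<Sum>\<chi>\<in>?Ch. \<chi> a) = (\<Sum>\<chi>\<in>?Ch. \<Sum>a\<in>carrier G. \<chi> a * cnj (?t a))"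
    by (subst sum.swap) (intro sum.cong refl, simp)
  also have "\<dots> = (\<Sum>\<chi>\<in>?Ch. if \<chi> = ?t then of_nat (Coset.order G) else 0)"
    by (intro sum.cong refl) (rule orth[OF _ ch_triv], simp)
  also have "\<dots> = of_nat (Coset.order G)" using ch_finite ch_triv by (simp add: sum.delta)
  finally show ?thesis using 1 by simp
qed

end

locale fcgc = fcg + fixes c assumes c_in: "c \<in> carrier G" and c_ne: "c \<noteq> \<one>" and c_sq: "c \<otimes> c = \<one>"
begin

definition Od where "Od = {\<chi>. isch G \<chi> \<and> \<chi> c = -1}"

lemma ch_c: assumes "isch G \<chi>" shows "\<chi> c = 1 \<or> \<chi> c = -1"
proof -
  have "\<chi> c * \<chi> c = 1" using ch_mult[OF assms c_in c_in] c_sq ch_one[OF assms] by simp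
  then have "(\<chi> c - 1) * (\<chi> c + 1) = 0" by (simp add: algebra_simps)
  then show ?thesis by (simp add: eq_neg_iff_add_eq_0)
qed

lemma c_inv: "inv c = c" using c_sq c_in by (intro inv_equality) auto

lemma Od_finite: "finite Od" using ch_finite by (rule finite_subset[rotated]) (auto simp: Od_def)

lemma odd_col: assumes a: "a \<in> carrier G"
  shows "(\<Sum>\<chi>\<in>Od. \<chi> a) = of_nat (Coset.order G) / 2 * ((if a = \<one> then 1 else 0) - (if a = c then 1 else 0))"
proof -
  let ?Ch = "{\<chi>. isch G \<chi>}"
  have "(\<Sum>\<chi>\<in>?Ch. (1 - \<chi> c) * \<chi> a) = (\<Sum>\<chi>\<in>?Ch. if \<chi> c = -1 then 2 * \<chi> a else 0)"
    using ch_c by (intro sum.cong refl) force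
  also have "\<dots> = (\<Sum>\<chi>\<in>Od. 2 * \<chi> a)"
  proof -
    have "Od = {\<chi>\<in>?Ch. \<chi> c = -1}" by (auto simp: Od_def)
    then show ?thesis using sum.inter_filter[OF ch_finite, of "\<lambda>\<chi>. 2 * \<chi> a" "\<lambda>\<chi>. \<chi> c = -1"] by simp
  qed
  finally have 1: "(\<Sum>\<chi>\<in>?Ch. (1 - \<chi> c) * \<chi> a) = 2 * (\<Sum>\<chi>\<in>Od. \<chi> a)"
    by (simp add: sum_distrib_left)
  have ca: "c \<otimes> a = \<one> \<longleftrightarrow> a = c"
    using a c_in c_sq by (metis c_inv inv_equality m_comm)
  have "(\<Sum>\<chi>\<in>?Ch. (1 - \<chi> c) * \<chi> a) = (\<Sum>\<chi>\<in>?Ch. \<chi> a) - (\<Sum>\<chi>\<in>?Ch. \<chi> (c \<otimes> a))"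
    using a c_in by (simp add: algebra_simps sum_subtractf ch_mult)
  also have "\<dots> = of_nat (Coset.order G) * ((if a = \<one> then 1 else 0) - (if a = c then 1 else 0))"
    using col[OF a] col[OF m_closed[OF c_in a]] ca card_ch by simp
  finally have "2 * (\<Sum>\<chi>\<in>Od. \<chi> a) = of_nat (Coset.order G) * ((if a = \<one> then 1 else 0) - (if a = c then 1 else 0))"
    using 1 by (simp only:)
  then show ?thesis by (rule half_lemma)
qed

lemma odd_orth:
  assumes P: "P \<subseteq> carrier G" "carrier G = P \<union> (\<lambda>x. c \<otimes> x) ` P" "P \<inter> (\<lambda>x. c \<otimes> x) ` P = {}"
    and chi: "\<chi> \<in> Od" and psi: "\<psi> \<in> Od"
  shows "(\<Sum>p\<in>P. \<chi> p * cnj (\<psi> p)) = (if \<chi> = \<psi> then of_nat (Coset.order G) / 2 else 0)"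
proof -
  have ic: "isch G \<chi>" "\<chi> c = -1" "isch G \<psi>" "\<psi> c = -1" using chi psi by (auto simp: Od_def)
  have fP: "finite P" using fin P(1) finite_subset by blast
  have inj: "inj_on (\<lambda>x. c \<otimes> x) P" using inj_on_subset[OF inj_on_cmult[OF c_in] P(1)] .
  have "(\<Sum>p\<in>carrier G. \<chi> p * cnj (\<psi> p)) = (\<Sum>p\<in>P. \<chi> p * cnj (\<psi> p)) + (\<Sum>p\<in>(\<lambda>x. c \<otimes> x) ` P. \<chi> p * cnj (\<psi> p))"
    using P(2,3) fP by (simp add: sum.union_disjoint)
  also have "(\<Sum>p\<in>(\<lambda>x. c \<otimes> x) ` P. \<chi> p * cnj (\<psi> p)) = (\<Sum>p\<in>P. \<chi> (c \<otimes> p) * cnj (\<psi> (c \<otimes> p)))"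
    using inj by (simp add: sum.reindex)
  also have "\<dots> = (\<Sum>p\<in>P. \<chi> p * cnj (\<psi> p))"
  proof (intro sum.cong refl)
    fix p assume "p \<in> P"
    then have p: "p \<in> carrier G" using P(1) by blast
    show "\<chi> (c \<otimes> p) * cnj (\<psi> (c \<otimes> p)) = \<chi> p * cnj (\<psi> p)"
      using ch_mult[OF ic(1) c_in p] ch_mult[OF ic(3) c_in p] ic by simp
  qed
  finally have S2: "(\<Sum>p\<in>carrier G. \<chi> p * cnj (\<psi> p)) = 2 * (\<Sum>p\<in>P. \<chi> p * cnj (\<psi> p))" by simp
  have "2 * (\<Sum>p\<in>P. \<chi> p * cnj (\<psi> p)) = (if \<chi> = \<psi> then of_nat (Coset.order G) else 0)"
    using orth[OF ic(1) ic(3)] S2 by metis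
  then show ?thesis by (cases "\<chi> = \<psi>") (simp_all add: field_simps)
qed

lemma fourier:
  assumes f: "\<forall>x\<in>carrier G. f (c \<otimes> x) = - f x" and x: "x \<in> carrier G"
  shows "f x = (\<Sum>\<chi>\<in>Od. (1 / of_nat (Coset.order G) * (\<Sum>g\<in>carrier G. f g * cnj (\<chi> g))) * \<chi> x)"
proof -
  let ?N = "of_nat (Coset.order G) :: complex"
  have N0: "?N \<noteq> 0" using order_pos by simp
  have eq1: "x \<otimes> inv g = \<one> \<longleftrightarrow> g = x" if "g \<in> carrier G" for g
    using inv_solve_right[OF one_closed x that] that by auto
  have eq2: "x \<otimes> inv g = c \<longleftrightarrow> g = c \<otimes> x" if g: "g \<in> carrier G" for g
  proof -
    have "x \<otimes> inv g = c \<longleftrightarrow> x = c \<otimes> g" using inv_solve_right[OF c_in x g] by auto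
    also have "\<dots> \<longleftrightarrow> g = c \<otimes> x" using inv_solve_left[OF x c_in g] c_inv by simp
    finally show ?thesis .
  qed
  have "(\<Sum>\<chi>\<in>Od. (1 / ?N * (\<Sum>g\<in>carrier G. f g * cnj (\<chi> g))) * \<chi> x)
      = (\<Sum>\<chi>\<in>Od. \<Sum>g\<in>carrier G. 1 / ?N * f g * \<chi> (x \<otimes> inv g))"
  proof (intro sum.cong refl)
    fix \<chi> assume "\<chi> \<in> Od"
    then have ic: "isch G \<chi>" by (simp add: Od_def)
    have "\<chi> (x \<otimes> inv g) = \<chi> x * cnj (\<chi> g)" if "g \<in> carrier G" for g
      using ch_mult[OF ic x inv_closed[OF that]] ch_inv[OF ic that] by simp
    then show "(1 / ?N * (\<Sum>g\<in>carrier G. f g * cnj (\<chi> g))) * \<chi> x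
      = (\<Sum>g\<in>carrier G. 1 / ?N * f g * \<chi> (x \<otimes> inv g))"
      by (simp add: sum_distrib_left sum_distrib_right mult_ac)
  qed
  also have "\<dots> = (\<Sum>g\<in>carrier G. 1 / ?N * f g * (\<Sum>\<chi>\<in>Od. \<chi> (x \<otimes> inv g)))"
    by (subst sum.swap) (simp add: sum_distrib_left)
  also have "\<dots> = (\<Sum>g\<in>carrier G. 1 / 2 * f g * ((if g = x then 1 else 0) - (if g = c \<otimes> x then 1 else 0)))"
  proof (intro sum.cong refl)
    fix g assume g: "g \<in> carrier G"
    show "1 / ?N * f g * (\<Sum>\<chi>\<in>Od. \<chi> (x \<otimes> inv g)) = 1 / 2 * f g * ((if g = x then 1 else 0) - (if g = c \<otimes> x then 1 else 0))"
    proof -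
      have "(\<Sum>\<chi>\<in>Od. \<chi> (x \<otimes> inv g)) = ?N / 2 * ((if g = x then 1 else 0) - (if g = c \<otimes> x then 1 else 0))"
        using odd_col[OF m_closed[OF x inv_closed[OF g]]] unfolding eq1[OF g] eq2[OF g] .
      then show ?thesis by (simp only: half_lemma2[OF N0])
    qed
  qed
  also have "\<dots> = (\<Sum>g\<in>carrier G. (if g = x then 1 / 2 * f g else 0) - (if g = c \<otimes> x then 1 / 2 * f g else 0))"
    by (intro sum.cong refl) simp
  also have "\<dots> = 1 / 2 * f x - 1 / 2 * f (c \<otimes> x)"
    using x c_in by (simp add: sum_subtractf sum.delta[OF fin])
  also have "\<dots> = f x" using f x by simp
  finally show ?thesis by simp
qed

end

definition Rg :: "nat \<Rightarrow> nat monoid" where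
  "Rg n = \<lparr>carrier = galG n, mult = gmul n, one = 1\<rparr>"

lemma Rg_simps [simp]: "carrier (Rg n) = galG n" "mult (Rg n) = gmul n" "one (Rg n) = 1"
  by (simp_all add: Rg_def)

lemma gmul_closed: "n \<ge> 2 \<Longrightarrow> a \<in> galG n \<Longrightarrow> b \<in> galG n \<Longrightarrow> gmul n a b \<in> galG n"
  by (simp add: galG_def gmul_def)

lemma Rg_comm_group: assumes n: "n \<ge> 2" shows "comm_group (Rg n)"
proof (rule comm_groupI)
  fix x y assume "x \<in> carrier (Rg n)" "y \<in> carrier (Rg n)"
  then show "x \<otimes>\<^bsub>Rg n\<^esub> y \<in> carrier (Rg n)" using n by (simp add: gmul_closed)
next
  show "\<one>\<^bsub>Rg n\<^esub> \<in> carrier (Rg n)" using n by (simp add: galG_def)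
next
  fix x y z assume "x \<in> carrier (Rg n)" "y \<in> carrier (Rg n)" "z \<in> carrier (Rg n)"
  show "x \<otimes>\<^bsub>Rg n\<^esub> y \<otimes>\<^bsub>Rg n\<^esub> z = x \<otimes>\<^bsub>Rg n\<^esub> (y \<otimes>\<^bsub>Rg n\<^esub> z)"
    by (simp add: gmul_def mod_mult_left_eq mod_mult_right_eq mult.assoc)
next
  fix x y assume "x \<in> carrier (Rg n)" "y \<in> carrier (Rg n)"
  show "x \<otimes>\<^bsub>Rg n\<^esub> y = y \<otimes>\<^bsub>Rg n\<^esub> x" by (simp add: gmul_def mult.commute)
next
  fix x assume "x \<in> carrier (Rg n)"
  then show "\<one>\<^bsub>Rg n\<^esub> \<otimes>\<^bsub>Rg n\<^esub> x = x" by (simp add: gmul_def galG_def)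
next
  fix x assume x: "x \<in> carrier (Rg n)"
  then have cx: "coprime x n" "x < n" by (auto simp: galG_def)
  define y where "y = x ^ (totient n - 1) mod n"
  have "y \<in> galG n" using n cx by (simp add: y_def galG_def)
  moreover have "gmul n y x = 1"
  proof -
    have tp: "totient n - 1 + 1 = totient n" using n by simp
    have "gmul n y x = x ^ totient n mod n"
      unfolding y_def gmul_def by (metis mod_mult_left_eq power_add power_one_right tp)
    also have "\<dots> = 1 mod n" using euler_theorem[OF cx(1)] by (simp add: cong_def)
    finally show ?thesis using n by simp
  qed
  ultimately show "\<exists>y\<in>carrier (Rg n). y \<otimes>\<^bsub>Rg n\<^esub> x = \<one>\<^bsub>Rg n\<^esub>" by auto
qed

lemma Rg_fcgc: assumes n: "n \<ge> 3" shows "fcgc (Rg n) (cconj n)"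
proof -
  interpret comm_group "Rg n" using Rg_comm_group n by simp
  have fin: "finite (galG n)" by (rule finite_subset[of _ "{..<n}"]) (auto simp: galG_def)
  have c: "cconj n \<in> galG n" using n coprime_diff_one_left_nat[of n] by (simp add: galG_def cconj_def)
  have c1: "cconj n \<noteq> 1" using n by (simp add: cconj_def)
  have e: "(n - 1) * (n - 1) = 1 + n * (n - 2)" using n
    by (cases n; cases "n - 1"; simp add: algebra_simps)
  have "gmul n (cconj n) (cconj n) = (1 + n * (n - 2)) mod n"
    unfolding gmul_def cconj_def e ..
  also have "\<dots> = 1 mod n" by (rule mod_mult_self2)
  finally have c2: "gmul n (cconj n) (cconj n) = 1" using n by simp
  show ?thesis
    by unfold_locales (use fin c c1 c2 in auto)
qed

lemma ginv_eq: assumes n: "n \<ge> 2" and a: "a \<in> galG n" shows "ginv n a = inv\<^bsub>Rg n\<^esub> a"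
proof -
  interpret comm_group "Rg n" using Rg_comm_group n by simp
  have i: "inv\<^bsub>Rg n\<^esub> a \<in> galG n" "gmul n a (inv\<^bsub>Rg n\<^esub> a) = 1" using a inv_closed[of a] r_inv[of a] by simp_all
  show ?thesis unfolding ginv_def
  proof (rule the_equality)
    show "inv\<^bsub>Rg n\<^esub> a \<in> galG n \<and> gmul n a (inv\<^bsub>Rg n\<^esub> a) = 1" using i by simp
  next
    fix b assume "b \<in> galG n \<and> gmul n a b = 1"
    then show "b = inv\<^bsub>Rg n\<^esub> a" using a by (metis Rg_simps inv_equality m_comm)
  qed
qed

lemma is_char_eq: "is_char n \<chi> \<longleftrightarrow> isch (Rg n) \<chi>"
  by (simp add: is_char_def isch_def)

lemma odd_chars_eq: "n \<ge> 3 \<Longrightarrow> odd_chars n = fcgc.Od (Rg n) (cconj n)"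
  by (simp add: odd_chars_def fcgc.Od_def[OF Rg_fcgc] is_char_eq)


lemma triple_sum:
  fixes u v :: "'x \<Rightarrow> 'k \<Rightarrow> complex"
  shows "(\<Sum>k\<in>K. (\<Sum>x\<in>X. u x k) * (\<Sum>y\<in>Y. v y k)) = (\<Sum>x\<in>X. \<Sum>y\<in>Y. \<Sum>k\<in>K. u x k * v y k)"
proof -
  have "(\<Sum>k\<in>K. (\<Sum>x\<in>X. u x k) * (\<Sum>y\<in>Y. v y k)) = (\<Sum>k\<in>K. \<Sum>x\<in>X. \<Sum>y\<in>Y. u x k * v y k)"
    by (simp add: sum_product)
  also have "\<dots> = (\<Sum>x\<in>X. \<Sum>k\<in>K. \<Sum>y\<in>Y. u x k * v y k)" by (rule sum.swap)
  also have "\<dots> = (\<Sum>x\<in>X. \<Sum>y\<in>Y. \<Sum>k\<in>K. u x k * v y k)" by (intro sum.cong refl sum.swap)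
  finally show ?thesis .
qed

lemma ginner_cnj: "ginner n b a = cnj (ginner n a b)"
  by (simp add: ginner_def cnj_sum mult.commute)

theorem lemma5p4:
  fixes n d :: nat and Phi :: "nat \<Rightarrow> nat" and f :: "nat \<Rightarrow> complex"
  assumes "n \<ge> 3"
    and "d = totient n div 2"
    and "cm_type n d Phi"
    and "odd_fun n f"
    and "\<forall>\<chi>\<in>odd_chars n. ginner n \<chi> f \<noteq> 0"
  shows "invertible_mat (Mf n d Phi f) \<and>
    (\<forall>Y \<in> carrier_vec d. \<forall>X \<in> carrier_vec d.
       Mf n d Phi f *\<^sub>v X = Y \<longleftrightarrow>
       X = vec d (\<lambda>j. \<Sum>\<chi>\<in>odd_chars n.
              \<chi> (Phi j) * (\<Sum>l<d. cnj (\<chi> (Phi l)) * Y $ l)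
              / (of_nat d ^ 2 * ginner n f \<chi>)))"
proof -
  have n2: "n \<ge> 2" using assms(1) by simp
  interpret fcgc "Rg n" "cconj n" using Rg_fcgc assms(1) .
  note cm = assms(3)[unfolded cm_type_def]
  let ?P = "Phi ` {..<d}"
  let ?c = "cconj n"
  have injP: "inj_on Phi {..<d}" and PG: "?P \<subseteq> galG n"
    and GU: "galG n = ?P \<union> gmul n ?c ` ?P" and disj: "?P \<inter> gmul n ?c ` ?P = {}"
    using cm by auto
  have Phi_in: "Phi k \<in> galG n" if "k < d" for k using PG that by auto
  have cG: "?c \<in> galG n" using c_in by simp
  have injc: "inj_on (gmul n ?c) ?P" using inj_on_subset[OF inj_on_cmult[OF c_in]] PG by simp
  have finG: "finite (galG n)" using fin by simp
  have cardG: "card (galG n) = 2 * d"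
  proof -
    have "card (galG n) = card ?P + card (gmul n ?c ` ?P)"
      using GU disj finG by (metis card_Un_disjoint finite_Un)
    also have "card ?P = d" using card_image[OF injP] by simp
    also have "card (gmul n ?c ` ?P) = d" using card_image[OF injc] \<open>card ?P = d\<close> by simp
    finally show ?thesis by simp
  qed
  have ordG: "Coset.order (Rg n) = 2 * d" by (simp add: Coset.order_def cardG)
  have "card (galG n) > 0" using finG one_closed by (auto simp: card_gt_0_iff)
  then have d0: "d \<noteq> 0" using cardG by simp
  define a where "a \<chi> = ginner n f \<chi>" for \<chi>
  have Od_eq: "odd_chars n = Od" using odd_chars_eq assms(1) by simp
  have chiOd: "isch (Rg n) \<chi>" if "\<chi> \<in> Od" for \<chi> using that by (simp add: Od_def)
  have fourier': "f x = (\<Sum>\<chi>\<in>Od. a \<chi> * \<chi> x)" if x: "x \<in> galG n" for x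
  proof -
    have "\<forall>x\<in>carrier (Rg n). f (x' \<otimes>\<^bsub>Rg n\<^esub> x) = - f x" if "x' = ?c" for x'
      using assms(4) that by (simp add: odd_fun_def)
    from fourier[OF this[OF refl]] x show ?thesis
      by (simp add: a_def ginner_def Coset.order_def mult.commute)
  qed
  have a_nz: "a \<chi> \<noteq> 0" if "\<chi> \<in> Od" for \<chi>
    using assms(5) that Od_eq ginner_cnj[of n \<chi> f] by (auto simp: a_def)
  have oorth: "(\<Sum>k<d. \<chi> (Phi k) * cnj (\<psi> (Phi k))) = (if \<chi> = \<psi> then of_nat d else 0)"
    if "\<chi> \<in> Od" "\<psi> \<in> Od" for \<chi> \<psi>
  proof -
    have "(\<Sum>p\<in>?P. \<chi> p * cnj (\<psi> p)) = (if \<chi> = \<psi> then of_nat (Coset.order (Rg n)) / 2 else 0)"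
      using odd_orth[of ?P \<chi> \<psi>] PG GU disj that by simp
    then show ?thesis using ordG by (simp add: sum.reindex[OF injP])
  qed
  have ocol: "(\<Sum>\<chi>\<in>Od. \<chi> u) = of_nat d * ((if u = 1 then 1 else 0) - (if u = ?c then 1 else 0))"
    if "u \<in> galG n" for u
    using odd_col[of u] that ordG by simp
  have ch_inv': "\<chi> (ginv n x) = cnj (\<chi> x)" if "\<chi> \<in> Od" "x \<in> galG n" for \<chi> x
    using ginv_eq[OF n2 that(2)] ch_inv[OF chiOd[OF that(1)]] that(2) by simp
  have ch_mult': "\<chi> (gmul n x y) = \<chi> x * \<chi> y" if "\<chi> \<in> Od" "x \<in> galG n" "y \<in> galG n" for \<chi> x y
    using ch_mult[OF chiOd[OF that(1)]] that(2,3) by simp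
  have ginv_in: "ginv n x \<in> galG n" if "x \<in> galG n" for x
    using ginv_eq[OF n2 that] inv_closed[of x] that by simp
  have eq1: "gmul n x (ginv n y) = 1 \<longleftrightarrow> x = y" if "x \<in> galG n" "y \<in> galG n" for x y
    using ginv_eq[OF n2 that(2)] inv_solve_right[of "\<one>\<^bsub>Rg n\<^esub>" x y] that one_closed l_one[of y] by auto
  have eq2: "gmul n x (ginv n y) = ?c \<longleftrightarrow> x = gmul n ?c y" if "x \<in> galG n" "y \<in> galG n" for x y
    using ginv_eq[OF n2 that(2)] inv_solve_right[of ?c x y] that cG by auto
  define A where "A = Mf n d Phi f"
  define B where "B = mat d d (\<lambda>(j,l). \<Sum>\<chi>\<in>Od. \<chi> (Phi j) * cnj (\<chi> (Phi l)) / (of_nat d ^ 2 * a \<chi>))"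
  have A: "A \<in> carrier_mat d d" by (simp add: A_def Mf_def)
  have B: "B \<in> carrier_mat d d" by (simp add: B_def)
  have AB: "A * B = 1\<^sub>m d"
  proof (rule eq_matI)
    fix l m assume lm: "l < dim_row (1\<^sub>m d)" "m < dim_col (1\<^sub>m d)"
    then have l: "l < d" and m: "m < d" by auto
    have "(A * B) $$ (l, m) = (\<Sum>k<d. A $$ (l,k) * B $$ (k,m))"
      using l m A B by (simp add: scalar_prod_def lessThan_atLeast0)
    also have "\<dots> = (\<Sum>k<d. (\<Sum>\<chi>\<in>Od. a \<chi> * cnj (\<chi> (Phi k)) * \<chi> (Phi l)) *
        (\<Sum>\<psi>\<in>Od. \<psi> (Phi k) * cnj (\<psi> (Phi m)) / (of_nat d ^ 2 * a \<psi>)))"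
    proof (intro sum.cong refl)
      fix k assume "k \<in> {..<d}"
      then have k: "k < d" by simp
      have "A $$ (l,k) = f (gmul n (ginv n (Phi k)) (Phi l))" using l k by (simp add: A_def Mf_def)
      also have "\<dots> = (\<Sum>\<chi>\<in>Od. a \<chi> * \<chi> (gmul n (ginv n (Phi k)) (Phi l)))"
        by (rule fourier') (use n2 ginv_in Phi_in k l gmul_closed in auto)
      also have "\<dots> = (\<Sum>\<chi>\<in>Od. a \<chi> * cnj (\<chi> (Phi k)) * \<chi> (Phi l))"
        by (intro sum.cong refl) (simp add: ch_mult' ch_inv' ginv_in Phi_in k l)
      finally show "A $$ (l,k) * B $$ (k,m) = (\<Sum>\<chi>\<in>Od. a \<chi> * cnj (\<chi> (Phi k)) * \<chi> (Phi l)) *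
        (\<Sum>\<psi>\<in>Od. \<psi> (Phi k) * cnj (\<psi> (Phi m)) / (of_nat d ^ 2 * a \<psi>))"
        using k m by (simp add: B_def)
    qed
    also have "\<dots> = (\<Sum>\<chi>\<in>Od. \<Sum>\<psi>\<in>Od. \<Sum>k<d. (a \<chi> * cnj (\<chi> (Phi k)) * \<chi> (Phi l)) *
        (\<psi> (Phi k) * cnj (\<psi> (Phi m)) / (of_nat d ^ 2 * a \<psi>)))"
      by (rule triple_sum)
    also have "\<dots> = (\<Sum>\<chi>\<in>Od. \<Sum>\<psi>\<in>Od. (a \<chi> * \<chi> (Phi l) * cnj (\<psi> (Phi m)) / (of_nat d ^ 2 * a \<psi>)) *
        (\<Sum>k<d. \<psi> (Phi k) * cnj (\<chi> (Phi k))))"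
      by (intro sum.cong refl) (simp add: sum_distrib_left sum_divide_distrib mult_ac)
    also have "\<dots> = (\<Sum>\<chi>\<in>Od. \<Sum>\<psi>\<in>Od. if \<psi> = \<chi> then (a \<chi> * \<chi> (Phi l) * cnj (\<psi> (Phi m)) / (of_nat d ^ 2 * a \<psi>)) * of_nat d else 0)"
      using oorth by (intro sum.cong refl) simp
    also have "\<dots> = (\<Sum>\<chi>\<in>Od. \<chi> (Phi l) * cnj (\<chi> (Phi m)) / of_nat d)"
    proof (intro sum.cong refl)
      fix \<chi> assume c: "\<chi> \<in> Od"
      have "(\<Sum>\<psi>\<in>Od. if \<psi> = \<chi> then (a \<chi> * \<chi> (Phi l) * cnj (\<psi> (Phi m)) / (of_nat d ^ 2 * a \<psi>)) * of_nat d else 0)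
          = (a \<chi> * \<chi> (Phi l) * cnj (\<chi> (Phi m)) / (of_nat d ^ 2 * a \<chi>)) * of_nat d"
        using Od_finite c by (simp add: sum.delta)
      also have "\<dots> = \<chi> (Phi l) * cnj (\<chi> (Phi m)) / of_nat d"
        using a_nz[OF c] d0 by (simp add: field_simps power2_eq_square)
      finally show "(\<Sum>\<psi>\<in>Od. if \<psi> = \<chi> then (a \<chi> * \<chi> (Phi l) * cnj (\<psi> (Phi m)) / (of_nat d ^ 2 * a \<psi>)) * of_nat d else 0)
          = \<chi> (Phi l) * cnj (\<chi> (Phi m)) / of_nat d" .
    qed
    also have "\<dots> = (\<Sum>\<chi>\<in>Od. \<chi> (gmul n (Phi l) (ginv n (Phi m)))) / of_nat d"
      by (simp add: sum_divide_distrib ch_mult' ch_inv' ginv_in Phi_in l m)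
    also have "\<dots> = (if l = m then 1 else 0)"
    proof -
      have u: "gmul n (Phi l) (ginv n (Phi m)) \<in> galG n"
        using n2 ginv_in Phi_in l m gmul_closed by auto
      have e1: "gmul n (Phi l) (ginv n (Phi m)) = 1 \<longleftrightarrow> l = m"
        using eq1[OF Phi_in[OF l] Phi_in[OF m]] injP l m by (auto dest: inj_onD)
      have e2: "gmul n (Phi l) (ginv n (Phi m)) \<noteq> ?c"
      proof
        assume "gmul n (Phi l) (ginv n (Phi m)) = ?c"
        then have "Phi l = gmul n ?c (Phi m)" using eq2[OF Phi_in[OF l] Phi_in[OF m]] by simp
        moreover have "Phi l \<in> ?P" using l by simp
        moreover have "gmul n ?c (Phi m) \<in> gmul n ?c ` ?P" using m by simp
        ultimately have "Phi l \<in> ?P \<inter> gmul n ?c ` ?P" by simp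
        then show False using disj by simp
      qed
      show ?thesis using ocol[OF u] e1 e2 d0 by simp
    qed
    finally show "(A * B) $$ (l, m) = 1\<^sub>m d $$ (l, m)" using l m by simp
  qed (use A B in simp_all)
  have BA: "B * A = 1\<^sub>m d" using mat_mult_left_right_inverse[OF A B AB] .
  have inv: "invertible_mat A"
    unfolding invertible_mat_def inverts_mat_def using A B AB BA
    by (intro conjI exI[of _ B]) (auto simp: square_mat.simps)
  have Bv: "B *\<^sub>v Y = vec d (\<lambda>j. \<Sum>\<chi>\<in>odd_chars n.
              \<chi> (Phi j) * (\<Sum>l<d. cnj (\<chi> (Phi l)) * Y $ l)
              / (of_nat d ^ 2 * ginner n f \<chi>))" if Y: "Y \<in> carrier_vec d" for Y
  proof (rule eq_vecI)
    fix j assume "j < dim_vec (vec d (\<lambda>j. \<Sum>\<chi>\<in>odd_chars n.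
              \<chi> (Phi j) * (\<Sum>l<d. cnj (\<chi> (Phi l)) * Y $ l)
              / (of_nat d ^ 2 * ginner n f \<chi>)))"
    then have j: "j < d" by simp
    have "(B *\<^sub>v Y) $ j = (\<Sum>l<d. (\<Sum>\<chi>\<in>Od. \<chi> (Phi j) * cnj (\<chi> (Phi l)) / (of_nat d ^ 2 * a \<chi>)) * Y $ l)"
      using j Y B by (simp add: B_def scalar_prod_def lessThan_atLeast0)
    also have "\<dots> = (\<Sum>l<d. \<Sum>\<chi>\<in>Od. \<chi> (Phi j) * (cnj (\<chi> (Phi l)) * Y $ l) / (of_nat d ^ 2 * a \<chi>))"
      by (simp add: sum_distrib_right mult.assoc)
    also have "\<dots> = (\<Sum>\<chi>\<in>Od. \<Sum>l<d. \<chi> (Phi j) * (cnj (\<chi> (Phi l)) * Y $ l) / (of_nat d ^ 2 * a \<chi>))"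
      by (rule sum.swap)
    also have "\<dots> = (\<Sum>\<chi>\<in>Od. \<chi> (Phi j) * (\<Sum>l<d. cnj (\<chi> (Phi l)) * Y $ l) / (of_nat d ^ 2 * a \<chi>))"
      by (simp add: sum_divide_distrib sum_distrib_left)
    finally show "(B *\<^sub>v Y) $ j = vec d (\<lambda>j. \<Sum>\<chi>\<in>odd_chars n.
              \<chi> (Phi j) * (\<Sum>l<d. cnj (\<chi> (Phi l)) * Y $ l)
              / (of_nat d ^ 2 * ginner n f \<chi>)) $ j"
      using j by (simp add: Od_eq a_def)
  qed (use B in simp)
  have sol: "A *\<^sub>v X = Y \<longleftrightarrow> X = B *\<^sub>v Y" if Y: "Y \<in> carrier_vec d" and X: "X \<in> carrier_vec d" for X Y
  proof
    assume "A *\<^sub>v X = Y"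
    then have "B *\<^sub>v Y = (B * A) *\<^sub>v X" using A B X by (simp add: assoc_mult_mat_vec)
    also have "\<dots> = X" using BA X by simp
    finally show "X = B *\<^sub>v Y" by simp
  next
    assume "X = B *\<^sub>v Y"
    then have "A *\<^sub>v X = (A * B) *\<^sub>v Y" using A B Y by (simp add: assoc_mult_mat_vec)
    also have "\<dots> = Y" using AB Y by simp
    finally show "A *\<^sub>v X = Y" .
  qed
  show ?thesis using inv sol Bv unfolding A_def by simp
qed

end
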